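(* Let $f$, $g$, $\xi$, $F$ satisfy the standing assumptions below, and let $x$ be the unique continuous solution of $x'(t)=-f(x(t))+g(t)$, $t>0$, $x(0)=\xi$. Suppose there exist $\delta>0$ and a function $\phi$ which is increasing on $(0,\delta)$ with $\lim_{x\to0^+}f(x)/\phi(x)=1$. If \[ \lim_{t\to\infty}\frac{g(t)}{f(F^{-1}(t))}=0, \] then \[ \lim_{t\to\infty}\frac{F(x(t))}{t}=1 . \]
   Context: Standing assumptions: $f\in C(\mathbb{R};\mathbb{R})$ is locally Lipschitz continuous on $\mathbb{R}$, $f(0)=0$ and $xf(x)>0$ for $x\neq0$; $g\in C([0,\infty);\mathbb{R})$ with $g(t)>0$ for $t>0$; the initial value $\xi>0$. Define $F(x)=\int_x^1 \frac{du}{f(u)}$ for $x>0$, and assume $\lim_{x\to0^+}F(x)=+\infty$. $F$ is strictly decreasing on $(0,\infty)$ and $F^{-1}$ denotes its inverse (defined in particular on $[0,\infty)$, with $F^{-1}(t)\to0$ as $t\to\infty$). *)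

theory Defs
  imports "HOL-Analysis.Analysis"
begin

definition Ffun :: "(real \<Rightarrow> real) \<Rightarrow> real \<Rightarrow> real" where
  "Ffun f x = (if x \<le> 1 then integral {x..1} (\<lambda>u. 1 / f u)
               else - integral {1..x} (\<lambda>u. 1 / f u))"

definition Finv :: "(real \<Rightarrow> real) \<Rightarrow> real \<Rightarrow> real" where
  "Finv f t = (THE y. y > 0 \<and> Ffun f y = t)"

end

theory Submission
  imports Defs
begin

lemma F_deriv:
  fixes f :: "real \<Rightarrow> real"
  assumes fc: "continuous_on UNIV f" and fpos: "\<And>y. y>0 \<Longrightarrow> f y > 0" and y: "y > 0"
  shows "(Ffun f has_real_derivative -(1/f y)) (at y)"
proof -
  define c where "c = min (y/2) (1/2)"
  define B where "B = y + 2"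
  define \<Phi> where "\<Phi> z = integral {c..z} (\<lambda>u. 1 / f u)" for z
  have c0: "c > 0" "c < y" "y < B" "1 < B" "c < 1" using y by (auto simp: c_def B_def)
  have nz: "\<And>u. u \<in> {c..B} \<Longrightarrow> f u \<noteq> 0" using fpos c0 by (metis atLeastAtMost_iff less_le_trans order_less_irrefl)
  have cont: "continuous_on {c..B} (\<lambda>u. 1 / f u)"
    using nz by (auto intro!: continuous_intros continuous_on_subset[OF fc])
  have int: "(\<lambda>u. 1/f u) integrable_on {c..B}" by (rule integrable_continuous_interval[OF cont])
  have "(\<Phi> has_real_derivative 1/f y) (at y within {c..B})"
    unfolding \<Phi>_def using integral_has_real_derivative[OF cont, of y] c0 by auto
  then have d1: "(\<Phi> has_real_derivative 1/f y) (at y)" using at_within_Icc_at[of c y B] c0 by simp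
  have d2: "((\<lambda>z. \<Phi> 1 - \<Phi> z) has_real_derivative -(1/f y)) (at y)"
    using d1 by (auto intro!: derivative_eq_intros)
  show ?thesis
  proof (rule has_field_derivative_transform_within_open[OF d2, of "{c<..<B}"])
    show "open {c<..<B}" by simp
    show "y \<in> {c<..<B}" using c0 by simp
    fix z assume z: "z \<in> {c<..<B}"
    show "\<Phi> 1 - \<Phi> z = Ffun f z"
    proof (cases "z \<le> 1")
      case True
      have "integral {c..z} (\<lambda>u. 1/f u) + integral {z..1} (\<lambda>u. 1/f u) = integral {c..1} (\<lambda>u. 1/f u)"
        by (rule Henstock_Kurzweil_Integration.integral_combine) (use z True c0 in \<open>auto intro: integrable_on_subinterval[OF int]\<close>)
      then show ?thesis using True by (simp add: Ffun_def \<Phi>_def)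
    next
      case False
      have "integral {c..1} (\<lambda>u. 1/f u) + integral {1..z} (\<lambda>u. 1/f u) = integral {c..z} (\<lambda>u. 1/f u)"
        by (rule Henstock_Kurzweil_Integration.integral_combine) (use z False c0 in \<open>auto intro: integrable_on_subinterval[OF int]\<close>)
      then show ?thesis using False by (simp add: Ffun_def \<Phi>_def)
    qed
  qed
qed

locale Fsetup =
  fixes f :: "real \<Rightarrow> real"
  assumes fc: "continuous_on UNIV f" and fpos: "\<And>y. y>0 \<Longrightarrow> f y > 0"
    and Flim: "filterlim (Ffun f) at_top (at_right 0)"
begin

lemma Fd: "y > 0 \<Longrightarrow> (Ffun f has_real_derivative -(1/f y)) (at y)"
  using F_deriv[OF fc fpos] by auto

lemma Fcont: "y > 0 \<Longrightarrow> isCont (Ffun f) y"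
  using Fd DERIV_isCont by blast

lemma Fstrict: assumes "0 < a" "a < b" shows "Ffun f b < Ffun f a"
proof (rule DERIV_neg_imp_decreasing[OF assms(2)])
  fix x assume "a \<le> x" "x \<le> b"
  then have "x > 0" using assms by auto
  then show "\<exists>y. DERIV (Ffun f) x :> y \<and> y < 0" using Fd[of x] fpos[of x] by (intro exI[of _ "-(1/f x)"]) auto
qed

lemma Fless_iff: "0 < a \<Longrightarrow> 0 < b \<Longrightarrow> Ffun f a < Ffun f b \<longleftrightarrow> b < a"
  by (metis Fstrict linorder_neqE_linordered_idom order_less_asym order_less_irrefl)

lemma Fle_iff: "0 < a \<Longrightarrow> 0 < b \<Longrightarrow> Ffun f a \<le> Ffun f b \<longleftrightarrow> b \<le> a"
  using Fless_iff by (meson linorder_not_le)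

lemma F1: "Ffun f 1 = 0" by (simp add: Ffun_def)

lemma Frange: assumes b: "b > 0" and s: "s \<ge> Ffun f b" shows "\<exists>y>0. Ffun f y = s"
proof -
  have "eventually (\<lambda>y. s + 1 \<le> Ffun f y) (at_right 0)"
    using Flim unfolding filterlim_at_top by blast
  then obtain b' where b': "b' > 0" "\<And>y. 0 < y \<Longrightarrow> y < b' \<Longrightarrow> s + 1 \<le> Ffun f y"
    unfolding eventually_at_right_field by auto
  define a where "a = min (b'/2) (b/2)"
  have a: "0 < a" "a < b" "a < b'" using b b' by (auto simp: a_def)
  have "Ffun f a \<ge> s" using b'(2)[of a] a by auto
  moreover have "continuous_on {a..b} (Ffun f)"
    using a by (intro continuous_at_imp_continuous_on ballI Fcont) auto
  ultimately obtain y where "a \<le> y" "y \<le> b" "Ffun f y = s"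
    using IVT2'[of "Ffun f" b s a] s a by auto
  then show ?thesis using a by (intro exI[of _ y]) auto
qed

lemma GF: "y > 0 \<Longrightarrow> Finv f (Ffun f y) = y"
  unfolding Finv_def by (rule the_equality) (auto, metis Fless_iff linorder_neqE_linordered_idom order_less_irrefl)

lemma Ginv: assumes "b > 0" "s \<ge> Ffun f b" shows "Finv f s > 0 \<and> Ffun f (Finv f s) = s"
  using Frange[OF assms] GF by auto

lemma G0: "s \<ge> 0 \<Longrightarrow> Finv f s > 0 \<and> Ffun f (Finv f s) = s"
  using Ginv[of 1 s] F1 by auto

lemma G_lim: "(Finv f \<longlongrightarrow> 0) at_top"
proof (rule tendstoI)
  fix e :: real assume e: "e > 0"
  have "eventually (\<lambda>t. t > max 0 (Ffun f e)) at_top" by (rule eventually_gt_at_top)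
  then show "eventually (\<lambda>t. dist (Finv f t) 0 < e) at_top"
  proof eventually_elim
    case (elim t)
    then have "Finv f t > 0" "Ffun f (Finv f t) = t" using G0[of t] by auto
    moreover have "Ffun f e < t" using elim by auto
    ultimately have "Finv f t < e" using Fless_iff[of e "Finv f t"] e by auto
    then show ?case using \<open>Finv f t > 0\<close> by simp
  qed
qed

lemma G_deriv: assumes t: "t \<ge> 0" shows "(Finv f has_real_derivative - f (Finv f t)) (at t)"
proof -
  define y where "y = Finv f t"
  have y: "y > 0" "Ffun f y = t" using G0[OF t] by (auto simp: y_def)
  have der: "(Ffun f has_real_derivative -(1/f (Finv f t))) (at (Finv f t))" using Fd y by (simp add: y_def)
  have lo: "Ffun f (2*y) < t" using Fstrict[of y "2*y"] y by auto
  have hi: "t < Ffun f (y/2)" using Fstrict[of "y/2" y] y by auto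
  have cont: "isCont (Finv f) (Ffun f y)"
    by (rule isCont_inverse_function2[of "y/2" y "2*y"]) (use y in \<open>auto intro!: GF Fcont\<close>)
  have "(Finv f has_real_derivative inverse (-(1/f (Finv f t)))) (at t)"
    by (rule DERIV_inverse_function[where f="Ffun f" and g="Finv f" and x=t and a="Ffun f (2*y)" and b="Ffun f (y/2)", OF der _ lo hi])
       (use y fpos[of y] cont GF[of y] in \<open>auto intro: Ginv[of "2*y", THEN conjunct2]\<close>)
  then show ?thesis by simp
qed

end


theorem theorem1:
  fixes f g x \<phi> :: "real \<Rightarrow> real" and \<xi> \<delta> :: real
  assumes f_cont: "continuous_on UNIV f"
    and f_loclip: "\<forall>y. \<exists>e>0. \<exists>L. L-lipschitz_on (cball y e) f"
    and f0: "f 0 = 0"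
    and f_sign: "\<forall>y. y \<noteq> 0 \<longrightarrow> y * f y > 0"
    and g_cont: "continuous_on {0..} g"
    and g_pos: "\<forall>t>0. g t > 0"
    and xi_pos: "\<xi> > 0"
    and F_lim: "filterlim (Ffun f) at_top (at_right 0)"
    and x_cont: "continuous_on {0..} x"
    and x_init: "x 0 = \<xi>"
    and x_ode: "\<forall>t>0. (x has_real_derivative (- f (x t) + g t)) (at t)"
    and delta_pos: "\<delta> > 0"
    and phi_mono: "mono_on {0<..<\<delta>} \<phi>"
    and phi_lim: "((\<lambda>y. f y / \<phi> y) \<longlongrightarrow> 1) (at_right 0)"
    and g_small: "((\<lambda>t. g t / f (Finv f t)) \<longlongrightarrow> 0) at_top"
  shows "((\<lambda>t. Ffun f (x t) / t) \<longlongrightarrow> 1) at_top"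
proof -
  have fpos: "\<And>y. y > 0 \<Longrightarrow> f y > 0"
    using f_sign by (metis less_irrefl zero_less_mult_pos)
  have fneg: "\<And>y. y \<le> 0 \<Longrightarrow> f y \<le> 0"
  proof -
    fix y :: real assume y: "y \<le> 0"
    show "f y \<le> 0"
    proof (cases "y = 0")
      case True then show ?thesis using f0 by simp
    next
      case False
      then have "y * f y > 0" using f_sign by auto
      then show ?thesis using y False by (auto simp: zero_less_mult_iff)
    qed
  qed
  interpret Fsetup f using f_cont fpos F_lim by unfold_locales auto
  have fcat: "\<And>y. isCont f y" using f_cont by (simp add: continuous_on_eq_continuous_at)

  have xpos: "\<And>t. t \<ge> 0 \<Longrightarrow> x t > 0"
  proof (rule ccontr)
    fix t1 :: real assume t1: "t1 \<ge> 0" "\<not> x t1 > 0"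
    define S where "S = {0..t1} \<inter> x -` {..0}"
    have clS: "closed S" unfolding S_def
      by (rule continuous_closed_preimage) (use continuous_on_subset[OF x_cont] in auto)
    have t1S: "t1 \<in> S" using t1 by (auto simp: S_def)
    have bdd: "bdd_below S" unfolding S_def by (rule bdd_belowI[of _ 0]) auto
    define t0 where "t0 = Inf S"
    have t0S: "t0 \<in> S" unfolding t0_def using closed_contains_Inf[OF _ bdd clS] t1S by auto
    then have t0: "0 \<le> t0" "x t0 \<le> 0" "t0 \<le> t1" by (auto simp: S_def)
    have t0pos: "t0 > 0" using t0 x_init xi_pos by (cases "t0 = 0") auto
    have below: "\<And>s. 0 \<le> s \<Longrightarrow> s < t0 \<Longrightarrow> x s > 0"
    proof (rule ccontr)
      fix s assume s: "0 \<le> s" "s < t0" "\<not> x s > 0"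
      then have "s \<in> S" using t0 by (auto simp: S_def)
      then have "t0 \<le> s" unfolding t0_def using bdd by (rule cInf_lower)
      then show False using s by simp
    qed
    have der: "(x has_real_derivative (- f (x t0) + g t0)) (at t0)" using x_ode t0pos by auto
    have "- f (x t0) + g t0 > 0" using fneg[OF t0(2)] g_pos t0pos by auto
    from DERIV_pos_inc_left[OF der this] obtain d where d: "d > 0" "\<And>h. h > 0 \<Longrightarrow> h < d \<Longrightarrow> x (t0 - h) < x t0"
      by auto
    define h where "h = min d t0 / 2"
    have h: "h > 0" "h < d" "h < t0" using d t0pos by (auto simp: h_def)
    have "x (t0 - h) < x t0" using d(2)[OF h(1,2)] .
    moreover have "x (t0 - h) > 0" using below[of "t0 - h"] h by auto
    ultimately show False using t0 by simp
  qed

  define w where "w t = Ffun f (x t) - t" for t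
  have wd: "\<And>t. t > 0 \<Longrightarrow> (w has_real_derivative -(g t / f (x t))) (at t)"
  proof -
    fix t :: real assume t: "t > 0"
    have xt: "x t > 0" using xpos t by auto
    have "((\<lambda>t. Ffun f (x t) - t) has_real_derivative (-(1/f (x t)) * (-f (x t) + g t) - 1)) (at t)"
      by (intro DERIV_diff DERIV_chain2[where f="Ffun f" and g=x, OF Fd[OF xt]] DERIV_ident) (use x_ode t in auto)
    moreover have "-(1/f (x t)) * (-f (x t) + g t) - 1 = -(g t / f (x t))"
      using fpos[OF xt] by (simp add: field_simps)
    ultimately show "(w has_real_derivative -(g t / f (x t))) (at t)" by (simp add: w_def[abs_def])
  qed
  have ratio_nn: "\<And>t. t > 0 \<Longrightarrow> g t / f (x t) \<ge> 0"
    using g_pos fpos xpos by (simp add: less_imp_le)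
  have wmono: "\<And>s t. 0 < s \<Longrightarrow> s \<le> t \<Longrightarrow> w t \<le> w s"
  proof -
    fix s t :: real assume st: "0 < s" "s \<le> t"
    show "w t \<le> w s"
    proof (rule DERIV_nonpos_imp_nonincreasing[OF st(2)])
      fix r assume r: "s \<le> r" "r \<le> t"
      then show "\<exists>y. DERIV w r :> y \<and> y \<le> 0" using wd[of r] ratio_nn[of r] st
        by (intro exI[of _ "-(g r / f (x r))"]) auto
    qed
  qed
  have wlow: "\<And>T1 e s. 0 < T1 \<Longrightarrow> T1 \<le> s \<Longrightarrow> (\<And>r. r \<ge> T1 \<Longrightarrow> g r / f (x r) \<le> e) \<Longrightarrow> w T1 - e * (s - T1) \<le> w s"
  proof -
    fix T1 e s :: real assume a: "0 < T1" "T1 \<le> s" and b: "\<And>r. r \<ge> T1 \<Longrightarrow> g r / f (x r) \<le> e"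
    have "(\<lambda>r. w r + e * r) T1 \<le> (\<lambda>r. w r + e * r) s"
    proof (rule DERIV_nonneg_imp_nondecreasing[OF a(2)])
      fix r assume r: "T1 \<le> r" "r \<le> s"
      have "DERIV (\<lambda>r. w r + e * r) r :> (-(g r / f (x r)) + e * 1)"
        by (intro DERIV_add DERIV_cmult DERIV_ident wd) (use r a in auto)
      then show "\<exists>y. DERIV (\<lambda>r. w r + e * r) r :> y \<and> y \<ge> 0" using b[of r] r
        by (intro exI[of _ "-(g r / f (x r)) + e * 1"]) auto
    qed
    then show "w T1 - e * (s - T1) \<le> w s" by (simp add: algebra_simps)
  qed

  have fG0: "((\<lambda>t. f (Finv f t)) \<longlongrightarrow> 0) at_top"
    using isCont_tendsto_compose[OF fcat G_lim] f0 by simp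
  have g0: "(g \<longlongrightarrow> 0) at_top"
  proof -
    have "((\<lambda>t. g t / f (Finv f t) * f (Finv f t)) \<longlongrightarrow> 0 * 0) at_top"
      by (rule tendsto_mult[OF g_small fG0])
    moreover have "eventually (\<lambda>t. g t / f (Finv f t) * f (Finv f t) = g t) at_top"
      using eventually_ge_at_top[of 0]
      by eventually_elim (metis G0 fpos less_irrefl nonzero_eq_divide_eq)
    ultimately show ?thesis using tendsto_cong by force
  qed
  obtain T where T: "T > 0" "\<And>t. t \<ge> T \<Longrightarrow> g t \<le> f (Finv f t)"
  proof -
    have "eventually (\<lambda>t. g t / f (Finv f t) < 1) at_top"
      using order_tendstoD(2)[OF g_small] by simp
    then obtain N where N: "\<And>t. t \<ge> N \<Longrightarrow> g t / f (Finv f t) < 1"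
      unfolding eventually_at_top_linorder by auto
    show ?thesis
    proof (rule that[of "max N 1"])
      fix t assume t: "t \<ge> max N 1"
      then have "f (Finv f t) > 0" using G0 fpos by auto
      then show "g t \<le> f (Finv f t)" using N[of t] t by (simp add: divide_less_eq)
    qed simp
  qed
  define B where "B = x T + Finv f T"
  have xB: "\<And>t. t \<ge> T \<Longrightarrow> x t \<le> B"
  proof -
    fix t assume t: "t \<ge> T"
    have "(\<lambda>s. x s + Finv f s) t \<le> (\<lambda>s. x s + Finv f s) T"
    proof (rule DERIV_nonpos_imp_nonincreasing[OF t])
      fix r assume r: "T \<le> r" "r \<le> t"
      have "DERIV (\<lambda>s. x s + Finv f s) r :> (-f (x r) + g r) + (- f (Finv f r))"
        by (intro DERIV_add G_deriv) (use r T x_ode in auto)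
      moreover have "(-f (x r) + g r) + (- f (Finv f r)) \<le> 0"
        using T(2)[of r] r fpos[OF xpos[of r]] T by force
      ultimately show "\<exists>y. DERIV (\<lambda>s. x s + Finv f s) r :> y \<and> y \<le> 0" by blast
    qed
    then show "x t \<le> B" using G0[of t] t T by (simp add: B_def)
  qed

  have key: "\<And>e. e > 0 \<Longrightarrow> eventually (\<lambda>t. \<bar>w t\<bar> < e * t) at_top"
  proof -
    fix e :: real assume e: "e > 0"
    show "eventually (\<lambda>t. \<bar>w t\<bar> < e * t) at_top"
    proof (cases "\<forall>t>0. w t > 0")
      case True
      have "eventually (\<lambda>t. t > max 1 (w 1 / e)) at_top" by (rule eventually_gt_at_top)
      then show ?thesis
      proof eventually_elim
        case (elim t)
        then have "0 < w t" "w t \<le> w 1" using True wmono[of 1 t] by auto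
        moreover have "w 1 < e * t" using elim e by (simp add: divide_less_eq mult.commute)
        ultimately show ?case by simp
      qed
    next
      case False
      then obtain T0 where T0: "T0 > 0" "w T0 \<le> 0" by (auto simp: not_less)
      have xG: "\<And>s. s \<ge> T0 \<Longrightarrow> Finv f s \<le> x s"
      proof -
        fix s assume s: "s \<ge> T0"
        have "w s \<le> 0" using wmono[of T0 s] T0 s by auto
        then have "Ffun f (x s) \<le> Ffun f (Finv f s)" using G0[of s] s T0 by (simp add: w_def)
        then show "Finv f s \<le> x s" using Fle_iff[of "x s" "Finv f s"] G0[of s] xpos[of s] s T0 by auto
      qed
      have "eventually (\<lambda>y. f y / \<phi> y > 1/2 \<and> f y / \<phi> y < 2) (at_right 0)"
        using order_tendstoD(1)[OF phi_lim, of "1/2"] order_tendstoD(2)[OF phi_lim, of 2]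
        by (auto intro: eventually_conj)
      then obtain b where b: "b > 0" "\<And>y. 0 < y \<Longrightarrow> y < b \<Longrightarrow> f y / \<phi> y > 1/2 \<and> f y / \<phi> y < 2"
        unfolding eventually_at_right_field by auto
      define \<eta> where "\<eta> = min b \<delta>"
      have eta: "\<eta> > 0" "\<eta> \<le> \<delta>" using b delta_pos by (auto simp: \<eta>_def)
      have comp: "\<And>y. 0 < y \<Longrightarrow> y < \<eta> \<Longrightarrow> \<phi> y > 0 \<and> f y \<le> 2 * \<phi> y \<and> \<phi> y \<le> 2 * f y"
      proof -
        fix y :: real assume y: "0 < y" "y < \<eta>"
        have r: "f y / \<phi> y > 1/2" "f y / \<phi> y < 2" using b(2)[of y] y by (auto simp: \<eta>_def)
        have fy: "f y > 0" using fpos y by auto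
        have ph: "\<phi> y > 0"
        proof (rule ccontr)
          assume "\<not> \<phi> y > 0"
          then have "f y / \<phi> y \<le> 0" using fy by (simp add: divide_nonneg_nonpos less_imp_le)
          then show False using r by simp
        qed
        show "\<phi> y > 0 \<and> f y \<le> 2 * \<phi> y \<and> \<phi> y \<le> 2 * f y"
          using r ph by (auto simp: divide_less_eq less_divide_eq)
      qed
      obtain m where m: "m > 0" "\<And>y. y \<in> {\<eta>..max \<eta> B} \<Longrightarrow> m \<le> f y"
      proof -
        have "\<exists>y0\<in>{\<eta>..max \<eta> B}. \<forall>y\<in>{\<eta>..max \<eta> B}. f y0 \<le> f y"
          by (rule continuous_attains_inf) (auto intro: continuous_on_subset[OF f_cont])
        then obtain y0 where "y0 \<in> {\<eta>..max \<eta> B}" "\<forall>y\<in>{\<eta>..max \<eta> B}. f y0 \<le> f y" by blast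
        then show ?thesis using that[of "f y0"] fpos[of y0] eta by auto
      qed
      define eps where "eps = e / 2"
      have eps: "eps > 0" using e by (simp add: eps_def)
      have "eventually (\<lambda>t. g t / f (Finv f t) < eps / 4 \<and> g t < m * eps) at_top"
        using order_tendstoD(2)[OF g_small, of "eps/4"] order_tendstoD(2)[OF g0, of "m*eps"] eps m
        by (auto intro: eventually_conj)
      then obtain T2 where T2: "\<And>t. t \<ge> T2 \<Longrightarrow> g t / f (Finv f t) < eps / 4 \<and> g t < m * eps"
        unfolding eventually_at_top_linorder by auto
      define T1 where "T1 = max (max T0 T) (max T2 1)"
      have T1: "T1 > 0" "T1 \<ge> T0" "T1 \<ge> T" "T1 \<ge> T2" by (auto simp: T1_def)
      have rat: "\<And>r. r \<ge> T1 \<Longrightarrow> g r / f (x r) \<le> eps"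
      proof -
        fix r assume r: "r \<ge> T1"
        have xr: "x r > 0" using xpos r T1 by auto
        have fxr: "f (x r) > 0" using fpos xr by auto
        have gr: "g r > 0" using g_pos r T1 by auto
        have Gr: "Finv f r > 0" using G0[of r] r T1 by auto
        have T2r: "g r / f (Finv f r) < eps / 4" "g r < m * eps" using T2[of r] r T1 by auto
        show "g r / f (x r) \<le> eps"
        proof (cases "x r < \<eta>")
          case True
          have Gx: "Finv f r \<le> x r" using xG[of r] r T1 by auto
          have "\<phi> (Finv f r) \<le> \<phi> (x r)"
            by (rule mono_onD[OF phi_mono]) (use Gx Gr True eta xr in auto)
          then have le: "f (Finv f r) \<le> 4 * f (x r)"
            using comp[of "Finv f r"] comp[of "x r"] Gx Gr True xr by auto
          have fG: "f (Finv f r) > 0" using fpos Gr by auto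
          have "(4 * g r) / (4 * f (x r)) \<le> (4 * g r) / f (Finv f r)"
            by (rule frac_le) (use gr fG le in auto)
          also have "\<dots> < eps"
          proof -
            have "4 * g r / f (Finv f r) = 4 * (g r / f (Finv f r))" by simp
            then show ?thesis using T2r(1) by linarith
          qed
          finally show ?thesis by simp
        next
          case False
          have "x r \<le> B" using xB[of r] r T1 by auto
          then have mf: "m \<le> f (x r)" using m(2)[of "x r"] False by auto
          have "g r / f (x r) \<le> g r / m"
            by (rule frac_le) (use gr m mf in auto)
          also have "\<dots> < eps" using T2r(2) m by (simp add: divide_less_eq mult.commute)
          finally show ?thesis by simp
        qed
      qed
      have "eventually (\<lambda>t. t > max T1 (\<bar>w T1\<bar> / eps)) at_top" by (rule eventually_gt_at_top)
      then show ?thesis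
      proof eventually_elim
        case (elim t)
        have lo: "w T1 - eps * (t - T1) \<le> w t" using wlow[of T1 t eps, OF T1(1) _ rat] elim by auto
        have up: "w t \<le> 0" using wmono[of T0 t] T0 elim T1 by auto
        have "\<bar>w T1\<bar> < eps * t" using elim eps by (simp add: divide_less_eq mult.commute)
        moreover have "w T1 - eps*t + eps*T1 \<le> w t" using lo by (simp add: algebra_simps)
        moreover have "eps*T1 \<ge> 0" using T1 eps by simp
        moreover have "e * t = 2 * (eps * t)" by (simp add: eps_def)
        ultimately have "- w t < e * t" by linarith
        moreover have "0 < e * t" using e elim T1 by simp
        ultimately show ?case using up by simp
      qed
    qed
  qed
  show ?thesis
  proof (rule tendstoI)
    fix e :: real assume e: "e > 0"
    have "eventually (\<lambda>t. \<bar>w t\<bar> < e * t \<and> t > 0) at_top"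
      using key[OF e] eventually_gt_at_top[of 0] by (rule eventually_conj)
    then show "eventually (\<lambda>t. dist (Ffun f (x t) / t) 1 < e) at_top"
    proof eventually_elim
      case (elim t)
      have "Ffun f (x t) / t - 1 = w t / t" using elim by (simp add: w_def field_simps)
      moreover have "\<bar>w t / t\<bar> < e" using elim by (simp add: abs_divide divide_less_eq)
      ultimately show ?case by (simp add: dist_real_def)
    qed
  qed
qed

end
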